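(* The Vietoris functor $\mathbb{V}\colon \mathbf{CH}\to\mathbf{CH}$ preserves coreflexive equalizers: if $f,g\colon X\to Y$ are morphisms in $\mathbf{CH}$ having a common retraction $k\colon Y\to X$ (i.e. $k\circ f=k\circ g=1_X$) and $h\colon E\to X$ is an equalizer of $f$ and $g$ in $\mathbf{CH}$, then $\mathbb{V}h$ is an equalizer of $\mathbb{V}f$ and $\mathbb{V}g$ in $\mathbf{CH}$.
   Context: $\mathbf{CH}$ denotes the category of compact Hausdorff spaces and continuous maps. For a compact Hausdorff space $X$, $\mathbb{V}X$ is the set of all closed subsets of $X$ (including $\varnothing$) with the Vietoris topology, generated by the sets $\Box U=\{K\in\mathbb{V}X\mid K\subseteq U\}$ and $\Diamond U=\{K\in\mathbb{V}X\mid K\cap U\neq\varnothing\}$ for $U$ open in $X$; it is a compact Hausdorff space. For a continuous $f\colon X\to Y$, $\mathbb{V}f\colon\mathbb{V}X\to\mathbb{V}Y$ is $K\mapsto f[K]$. *)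

theory Defs
  imports "HOL-Analysis.Analysis"
begin

definition CH :: "'a topology \<Rightarrow> bool" where
  "CH X \<longleftrightarrow> compact_space X \<and> Hausdorff_space X"

text \<open>Vietoris hyperspace: all closed subsets (including the empty set),
  topology generated by the sets Box U and Diamond U for U open.\<close>
definition vietoris :: "'a topology \<Rightarrow> 'a set topology" where
  "vietoris X = topology_generated_by
     ({{K. closedin X K \<and> K \<subseteq> U} | U. openin X U} \<union>
      {{K. closedin X K \<and> K \<inter> U \<noteq> {}} | U. openin X U})"

definition vmap :: "('a \<Rightarrow> 'b) \<Rightarrow> 'a set \<Rightarrow> 'b set" where
  "vmap f K = f ` K"

text \<open>h : E \<rightarrow> X is an equalizer of f, g : X \<rightarrow> Y in CH.  Morphisms are
  continuous maps, identified when they agree on the carrier.  Test objects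
  Z range over compact Hausdorff spaces whose points live in the type 'z
  (the type is a parameter, as HOL cannot quantify over types in a formula).\<close>
definition is_equalizer_CH ::
  "'z itself \<Rightarrow> 'e topology \<Rightarrow> 'x topology \<Rightarrow> ('x \<Rightarrow> 'y) \<Rightarrow> ('x \<Rightarrow> 'y) \<Rightarrow> ('e \<Rightarrow> 'x) \<Rightarrow> bool"
where
  "is_equalizer_CH (_::'z itself) E X f g h \<longleftrightarrow>
     CH E \<and> continuous_map E X h \<and> (\<forall>e\<in>topspace E. f (h e) = g (h e)) \<and>
     (\<forall>(Z::'z topology) z. CH Z \<and> continuous_map Z X z \<and> (\<forall>t\<in>topspace Z. f (z t) = g (z t))
        \<longrightarrow> (\<exists>u. continuous_map Z E u \<and> (\<forall>t\<in>topspace Z. h (u t) = z t)) \<and>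
            (\<forall>u u'. continuous_map Z E u \<and> continuous_map Z E u' \<and>
                    (\<forall>t\<in>topspace Z. h (u t) = z t) \<and> (\<forall>t\<in>topspace Z. h (u' t) = z t)
                    \<longrightarrow> (\<forall>t\<in>topspace Z. u t = u' t)))"

end

theory Submission
  imports Defs
begin

lemma gen_subbase_eq:
  "topology (arbitrary union_of (finite intersection_of (\<lambda>x. x \<in> S) relative_to \<Union>S))
   = topology_generated_by S"
proof (rule topology_eq[THEN iffD2], intro allI iffI)
  fix A
  assume A: "openin (topology (arbitrary union_of (finite intersection_of (\<lambda>x. x \<in> S) relative_to \<Union>S))) A"
  show "openin (topology_generated_by S) A"
    by (rule minimal_topology_subbase[where X="topology_generated_by S", OF _ _ A])
       (auto simp: topology_generated_by_Basis)
next
  fix A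
  assume "openin (topology_generated_by S) A"
  then have "generate_topology_on S A" by (rule openin_topology_generated_by)
  then show "openin (topology (arbitrary union_of (finite intersection_of (\<lambda>x. x \<in> S) relative_to \<Union>S))) A"
  proof induction
    case (Basis s)
    then show ?case
      by (simp add: arbitrary_union_of_inc finite_intersection_of_inc openin_subbase
          relative_to_subset_inc Sup_upper)
  qed auto
qed

lemma compact_generated:
  assumes "\<And>C. \<lbrakk>C \<subseteq> S; \<Union>C = \<Union>S\<rbrakk> \<Longrightarrow> \<exists>C'. finite C' \<and> C' \<subseteq> C \<and> \<Union>C' = \<Union>S"
  shows "compact_space (topology_generated_by S)"
  by (rule Alexander_subbase[where \<B>=S]) (use gen_subbase_eq assms in auto)

definition VBox :: "'a topology \<Rightarrow> 'a set \<Rightarrow> 'a set set" where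
  "VBox X U = {K. closedin X K \<and> K \<subseteq> U}"
definition VDia :: "'a topology \<Rightarrow> 'a set \<Rightarrow> 'a set set" where
  "VDia X U = {K. closedin X K \<and> K \<inter> U \<noteq> {}}"

lemma vietoris_alt:
  "vietoris X = topology_generated_by ({VBox X U | U. openin X U} \<union> {VDia X U |U. openin X U})"
  by (simp add: vietoris_def VBox_def VDia_def)

lemma topspace_vietoris: "topspace (vietoris X) = {K. closedin X K}"
  unfolding vietoris_alt topology_generated_by_topspace
proof (intro equalityI subsetI)
  fix K assume "K \<in> \<Union> ({VBox X U | U. openin X U} \<union> {VDia X U |U. openin X U})"
  then show "K \<in> {K. closedin X K}" by (auto simp: VBox_def VDia_def)
next
  fix K assume "K \<in> {K. closedin X K}"
  then have "K \<in> VBox X (topspace X)" by (auto simp: VBox_def closedin_subset)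
  then show "K \<in> \<Union> ({VBox X U | U. openin X U} \<union> {VDia X U |U. openin X U})" by blast
qed

lemma openin_VBox: "openin X U \<Longrightarrow> openin (vietoris X) (VBox X U)"
  unfolding vietoris_alt by (rule topology_generated_by_Basis) blast

lemma openin_VDia: "openin X U \<Longrightarrow> openin (vietoris X) (VDia X U)"
  unfolding vietoris_alt by (rule topology_generated_by_Basis) blast

lemma continuous_into_vietoris:
  assumes "\<And>t. t \<in> topspace Z \<Longrightarrow> closedin X (u t)"
    and "\<And>U. openin X U \<Longrightarrow> openin Z {t\<in>topspace Z. u t \<subseteq> U}"
    and "\<And>U. openin X U \<Longrightarrow> openin Z {t\<in>topspace Z. u t \<inter> U \<noteq> {}}"
  shows "continuous_map Z (vietoris X) u"
  unfolding vietoris_alt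
proof (rule continuous_on_generated_topo)
  fix W assume "W \<in> {VBox X U | U. openin X U} \<union> {VDia X U |U. openin X U}"
  then obtain U where U: "openin X U" "W = VBox X U \<or> W = VDia X U" by blast
  show "openin Z (u -` W \<inter> topspace Z)"
  proof (cases "W = VBox X U")
    case True
    have "u -` W \<inter> topspace Z = {t\<in>topspace Z. u t \<subseteq> U}"
      using True assms(1) by (auto simp: VBox_def)
    then show ?thesis using assms(2)[OF U(1)] by simp
  next
    case False
    then have W: "W = VDia X U" using U by blast
    have "u -` W \<inter> topspace Z = {t\<in>topspace Z. u t \<inter> U \<noteq> {}}"
      using W assms(1) by (auto simp: VDia_def)
    then show ?thesis using assms(3)[OF U(1)] by simp
  qed
next
  have "u ` topspace Z \<subseteq> topspace (vietoris X)"
    using assms(1) by (auto simp: topspace_vietoris)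
  then show "u ` topspace Z \<subseteq> \<Union> ({VBox X U | U. openin X U} \<union> {VDia X U |U. openin X U})"
    by (simp add: vietoris_alt)
qed

lemma continuous_vietoris_Box:
  assumes "continuous_map Z (vietoris X) z" "openin X U"
  shows "openin Z {t\<in>topspace Z. z t \<subseteq> U}"
proof -
  have "{t\<in>topspace Z. z t \<subseteq> U} = {t\<in>topspace Z. z t \<in> VBox X U}"
    using continuous_map_image_subset_topspace[OF assms(1)]
    by (auto simp: VBox_def topspace_vietoris)
  then show ?thesis
    using openin_continuous_map_preimage[OF assms(1) openin_VBox[OF assms(2)]] by simp
qed

lemma continuous_vietoris_Dia:
  assumes "continuous_map Z (vietoris X) z" "openin X U"
  shows "openin Z {t\<in>topspace Z. z t \<inter> U \<noteq> {}}"
proof -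
  have "{t\<in>topspace Z. z t \<inter> U \<noteq> {}} = {t\<in>topspace Z. z t \<in> VDia X U}"
    using continuous_map_image_subset_topspace[OF assms(1)]
    by (auto simp: VDia_def topspace_vietoris)
  then show ?thesis
    using openin_continuous_map_preimage[OF assms(1) openin_VDia[OF assms(2)]] by simp
qed

lemma continuous_vietoris_closed:
  assumes "continuous_map Z (vietoris X) z" "t \<in> topspace Z"
  shows "closedin X (z t)"
  using continuous_map_image_subset_topspace[OF assms(1)] assms(2)
  by (auto simp: topspace_vietoris)


lemma Hausdorff_vietoris:
  assumes "compact_space X" "Hausdorff_space X"
  shows "Hausdorff_space (vietoris X)"
proof -
  have reg: "regular_space X" using assms compact_Hausdorff_imp_regular_space by blast
  have key: "\<exists>U V. openin (vietoris X) U \<and> openin (vietoris X) V \<and> A \<in> U \<and> B \<in> V \<and> disjnt U V"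
    if A: "closedin X A" and B: "closedin X B" and x: "x \<in> A" "x \<notin> B" for A B x
  proof -
    have "x \<in> topspace X - B" using x A closedin_subset by blast
    then have "\<exists>U V. openin X U \<and> openin X V \<and> x \<in> U \<and> B \<subseteq> V \<and> disjnt U V"
      using reg[unfolded regular_space_def, rule_format, OF conjI[OF B]] by simp
    then obtain U V where UV: "openin X U" "openin X V" "x \<in> U" "B \<subseteq> V" "disjnt U V"
      by blast
    show ?thesis
    proof (intro exI conjI)
      show "openin (vietoris X) (VDia X U)" using openin_VDia UV(1) .
      show "openin (vietoris X) (VBox X V)" using openin_VBox UV(2) .
      show "A \<in> VDia X U" using A x UV(3) by (auto simp: VDia_def)
      show "B \<in> VBox X V" using B UV(4) by (simp add: VBox_def)
      show "disjnt (VDia X U) (VBox X V)" using UV(5) by (auto simp: disjnt_def VBox_def VDia_def)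
    qed
  qed
  show ?thesis
    unfolding Hausdorff_space_def topspace_vietoris
  proof (intro allI impI, elim conjE)
    fix A B assume A0: "A \<in> Collect (closedin X)" and B0: "B \<in> Collect (closedin X)" and ne: "A \<noteq> B"
    have A: "closedin X A" using A0 by simp
    have B: "closedin X B" using B0 by simp
    show "\<exists>U V. openin (vietoris X) U \<and> openin (vietoris X) V \<and> A \<in> U \<and> B \<in> V \<and> disjnt U V"
    proof (cases "A - B = {}")
      case False
      then obtain x where "x \<in> A" "x \<notin> B" by blast
      then show ?thesis using key[OF A B] by simp
    next
      case True
      then obtain x where x1: "x \<in> B" and x2: "x \<notin> A" using ne by blast
      from key[OF B A x1 x2] obtain U V where "openin (vietoris X) U" "openin (vietoris X) V" "B \<in> U" "A \<in> V" "disjnt U V"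
        by blast
      then show ?thesis using disjnt_sym by blast
    qed
  qed
qed

lemma compact_vietoris:
  assumes "compact_space X"
  shows "compact_space (vietoris X)"
  unfolding vietoris_alt
proof (rule compact_generated)
  define S where "S = {VBox X U | U. openin X U} \<union> {VDia X U |U. openin X U}"
  have US: "\<Union>S = {K. closedin X K}"
    using topspace_vietoris[of X] unfolding S_def vietoris_alt by simp
  fix C assume C: "C \<subseteq> {VBox X U | U. openin X U} \<union> {VDia X U |U. openin X U}"
    and cov: "\<Union>C = \<Union>({VBox X U | U. openin X U} \<union> {VDia X U |U. openin X U})"
  have cov': "\<Union>C = {K. closedin X K}" using cov US by (simp add: S_def)
  define J where "J = {U. openin X U \<and> VDia X U \<in> C}"
  define F where "F = topspace X - \<Union>J"
  have "openin X (\<Union>J)" by (auto simp: J_def)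
  then have Fc: "closedin X F" by (simp add: F_def closedin_diff)
  then obtain c where c: "c \<in> C" "F \<in> c" using cov' by blast
  have "c \<in> {VBox X U | U. openin X U} \<union> {VDia X U |U. openin X U}" using C c(1) by (rule subsetD)
  then obtain U0 where U0: "openin X U0" "c = VBox X U0 \<or> c = VDia X U0" by blast
  have cbox: "c = VBox X U0"
  proof (rule ccontr)
    assume "c \<noteq> VBox X U0"
    then have "c = VDia X U0" using U0 by blast
    then have "U0 \<in> J" "F \<inter> U0 \<noteq> {}" using c U0 by (auto simp: J_def VDia_def)
    then show False by (auto simp: F_def)
  qed
  then have FU0: "F \<subseteq> U0" using c by (auto simp: VBox_def)
  have "compactin X (topspace X - U0)"
    using assms U0(1) closedin_compact_space by blast
  moreover have "topspace X - U0 \<subseteq> \<Union>J" using FU0 by (auto simp: F_def)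
  moreover have "\<forall>U\<in>J. openin X U" by (auto simp: J_def)
  ultimately obtain J' where J': "finite J'" "J' \<subseteq> J" "topspace X - U0 \<subseteq> \<Union>J'"
    unfolding compactin_def by meson
  show "\<exists>C'. finite C' \<and> C' \<subseteq> C \<and> \<Union>C' = \<Union>({VBox X U | U. openin X U} \<union> {VDia X U |U. openin X U})"
  proof (intro exI conjI)
    show "finite (insert c (VDia X ` J'))" using J' by simp
    show "insert c (VDia X ` J') \<subseteq> C" using J' c by (auto simp: J_def)
    show "\<Union>(insert c (VDia X ` J')) = \<Union>({VBox X U | U. openin X U} \<union> {VDia X U |U. openin X U})"
    proof
      show "\<Union>(insert c (VDia X ` J')) \<subseteq> \<Union>({VBox X U | U. openin X U} \<union> {VDia X U |U. openin X U})"
        using Union_mono[OF \<open>insert c (VDia X ` J') \<subseteq> C\<close>] cov by simp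
    next
      show "\<Union>({VBox X U | U. openin X U} \<union> {VDia X U |U. openin X U}) \<subseteq> \<Union>(insert c (VDia X ` J'))"
      proof
        fix K assume "K \<in> \<Union>({VBox X U | U. openin X U} \<union> {VDia X U |U. openin X U})"
        then have K: "closedin X K" by (auto simp: VBox_def VDia_def)
        show "K \<in> \<Union>(insert c (VDia X ` J'))"
        proof (cases "K \<subseteq> U0")
          case True
          then show ?thesis using K cbox by (auto simp: VBox_def)
        next
          case False
          then obtain x where "x \<in> K" "x \<notin> U0" by blast
          then have "x \<in> topspace X - U0" using K closedin_subset by blast
          then obtain V where "V \<in> J'" "x \<in> V" using J' by blast
          then have "K \<in> VDia X V" using K \<open>x \<in> K\<close> by (auto simp: VDia_def)
          then show ?thesis using \<open>V \<in> J'\<close> by blast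
        qed
      qed
    qed
  qed
qed

lemma CH_vietoris: "CH X \<Longrightarrow> CH (vietoris X)"
  unfolding CH_def using compact_vietoris Hausdorff_vietoris by blast


lemma eqz_basic:
  assumes "is_equalizer_CH TYPE('z) E X f g h"
  shows "CH E" "continuous_map E X h" "\<forall>e\<in>topspace E. f (h e) = g (h e)"
    and "\<And>x. \<lbrakk>x \<in> topspace X; f x = g x\<rbrakk> \<Longrightarrow> \<exists>e\<in>topspace E. h e = x"
    and "inj_on h (topspace E)"
proof -
  note D = assms[unfolded is_equalizer_CH_def]
  show "CH E" "continuous_map E X h" "\<forall>e\<in>topspace E. f (h e) = g (h e)" using D by auto
  define Z :: "'z topology" where "Z = discrete_topology {undefined}"
  have CZ: "CH Z" by (simp add: Z_def CH_def compact_space_discrete_topology Hausdorff_space_discrete_topology)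
  have tZ: "topspace Z = {undefined}" by (simp add: Z_def)
  have U: "\<And>z. continuous_map Z X z \<and> (\<forall>t\<in>topspace Z. f (z t) = g (z t))
        \<Longrightarrow> (\<exists>u. continuous_map Z E u \<and> (\<forall>t\<in>topspace Z. h (u t) = z t)) \<and>
            (\<forall>u u'. continuous_map Z E u \<and> continuous_map Z E u' \<and>
                    (\<forall>t\<in>topspace Z. h (u t) = z t) \<and> (\<forall>t\<in>topspace Z. h (u' t) = z t)
                    \<longrightarrow> (\<forall>t\<in>topspace Z. u t = u' t))"
    using D CZ by blast
  show "\<exists>e\<in>topspace E. h e = x" if x: "x \<in> topspace X" "f x = g x" for x
  proof -
    have "continuous_map Z X (\<lambda>_. x)" using x by (simp add: continuous_map_const)
    then obtain u where u: "continuous_map Z E u" "\<forall>t\<in>topspace Z. h (u t) = x"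
      using U[of "\<lambda>_. x"] x tZ by auto
    have "u undefined \<in> topspace E" using continuous_map_image_subset_topspace[OF u(1)] tZ by auto
    then show ?thesis using u(2) tZ by auto
  qed
  show "inj_on h (topspace E)"
  proof (rule inj_onI)
    fix e e' assume e: "e \<in> topspace E" "e' \<in> topspace E" "h e = h e'"
    have hc: "continuous_map E X h" using D by auto
    have he: "h e \<in> topspace X" using hc e(1) continuous_map_image_subset_topspace by blast
    have "f (h e) = g (h e)" using D e(1) by auto
    moreover have "continuous_map Z X (\<lambda>_. h e)" using he by (simp add: continuous_map_const)
    moreover have "continuous_map Z E (\<lambda>_. e)" "continuous_map Z E (\<lambda>_. e')"
      using e by (simp_all add: continuous_map_const)
    ultimately have uniq: "\<forall>u u'. continuous_map Z E u \<and> continuous_map Z E u' \<and>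
                    (\<forall>t\<in>topspace Z. h (u t) = h e) \<and> (\<forall>t\<in>topspace Z. h (u' t) = h e)
                    \<longrightarrow> (\<forall>t\<in>topspace Z. u t = u' t)"
      and c1: "continuous_map Z E (\<lambda>_. e)" and c2: "continuous_map Z E (\<lambda>_. e')"
      using U[of "\<lambda>_. h e"] tZ by auto
    show "e = e'" using uniq[rule_format, of "\<lambda>_. e" "\<lambda>_. e'" undefined] c1 c2 e(3) tZ by simp
  qed
qed

theorem proposition2p6:
  fixes X :: "'x topology" and Y :: "'y topology" and E :: "'e topology"
    and f g :: "'x \<Rightarrow> 'y" and k :: "'y \<Rightarrow> 'x" and h :: "'e \<Rightarrow> 'x"
  assumes "CH X" and "CH Y"
    and "continuous_map X Y f" and "continuous_map X Y g"
    and "continuous_map Y X k"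
    and "\<forall>x\<in>topspace X. k (f x) = x" and "\<forall>x\<in>topspace X. k (g x) = x"
    and "is_equalizer_CH TYPE('z) E X f g h"
  shows "is_equalizer_CH TYPE('w) (vietoris E) (vietoris X) (vmap f) (vmap g) (vmap h)"
proof -
  note B = eqz_basic[OF assms(8)]
  have CE: "CH E" and hc: "continuous_map E X h" and feq: "\<forall>e\<in>topspace E. f (h e) = g (h e)"
    and surj: "\<And>x. \<lbrakk>x \<in> topspace X; f x = g x\<rbrakk> \<Longrightarrow> \<exists>e\<in>topspace E. h e = x"
    and inj: "inj_on h (topspace E)" using B by auto
  have cE: "compact_space E" and hX: "Hausdorff_space X" using CE assms(1) by (auto simp: CH_def)
  have hclosed: "closedin X (h ` K)" if "closedin E K" for K
    by (rule compactin_imp_closedin[OF hX image_compactin[OF closedin_compact_space[OF cE that] hc]])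
  have himg: "h ` topspace E \<subseteq> topspace X" using hc continuous_map_image_subset_topspace by blast
  have opn: "\<exists>U'. openin X U' \<and> (\<forall>e\<in>topspace E. e \<in> U \<longleftrightarrow> h e \<in> U')" if U: "openin E U" for U
  proof (intro exI conjI ballI)
    have "closedin X (h ` (topspace E - U))" using hclosed U by blast
    then show "openin X (topspace X - h ` (topspace E - U))" by blast
    fix e assume e: "e \<in> topspace E"
    show "e \<in> U \<longleftrightarrow> h e \<in> topspace X - h ` (topspace E - U)"
    proof
      assume "e \<in> U"
      moreover have "h e \<in> topspace X" using e himg by blast
      moreover have "h e \<notin> h ` (topspace E - U)"
      proof
        assume "h e \<in> h ` (topspace E - U)"
        then obtain e' where "e' \<in> topspace E - U" "h e = h e'" by blast
        then show False using inj e \<open>e \<in> U\<close> by (metis DiffE inj_onD)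
      qed
      ultimately show "h e \<in> topspace X - h ` (topspace E - U)" by blast
    next
      assume "h e \<in> topspace X - h ` (topspace E - U)"
      then show "e \<in> U" using e by blast
    qed
  qed
  show ?thesis
    unfolding is_equalizer_CH_def
  proof (intro conjI allI impI)
    show "CH (vietoris E)" using CE CH_vietoris by blast
    show "continuous_map (vietoris E) (vietoris X) (vmap h)"
    proof (rule continuous_into_vietoris)
      fix K assume "K \<in> topspace (vietoris E)"
      then show "closedin X (vmap h K)" using hclosed by (simp add: topspace_vietoris vmap_def)
    next
      fix U assume U: "openin X U"
      have "{K \<in> topspace (vietoris E). vmap h K \<subseteq> U} = VBox E {x \<in> topspace E. h x \<in> U}"
        using closedin_subset by (fastforce simp: topspace_vietoris vmap_def VBox_def)
      then show "openin (vietoris E) {K \<in> topspace (vietoris E). vmap h K \<subseteq> U}"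
        using openin_VBox openin_continuous_map_preimage[OF hc U] by metis
    next
      fix U assume U: "openin X U"
      have "{K \<in> topspace (vietoris E). vmap h K \<inter> U \<noteq> {}} = VDia E {x \<in> topspace E. h x \<in> U}"
        using closedin_subset by (fastforce simp: topspace_vietoris vmap_def VDia_def)
      then show "openin (vietoris E) {K \<in> topspace (vietoris E). vmap h K \<inter> U \<noteq> {}}"
        using openin_VDia openin_continuous_map_preimage[OF hc U] by metis
    qed
    show "\<forall>e\<in>topspace (vietoris E). vmap f (vmap h e) = vmap g (vmap h e)"
    proof
      fix K assume "K \<in> topspace (vietoris E)"
      then have "K \<subseteq> topspace E" using closedin_subset by (auto simp: topspace_vietoris)
      then show "vmap f (vmap h K) = vmap g (vmap h K)"
        using feq unfolding vmap_def image_image by (intro image_cong) auto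
    qed
    fix Z :: "'w topology" and z
    assume H: "CH Z \<and> continuous_map Z (vietoris X) z \<and> (\<forall>t\<in>topspace Z. vmap f (z t) = vmap g (z t))"
    then have zc: "continuous_map Z (vietoris X) z" and zeq: "\<forall>t\<in>topspace Z. f ` (z t) = g ` (z t)"
      by (auto simp: vmap_def)
    have zcl: "closedin X (z t)" if "t \<in> topspace Z" for t using continuous_vietoris_closed[OF zc that] .
    have zfg: "f x = g x" if t: "t \<in> topspace Z" and x: "x \<in> z t" for t x
    proof -
      have xX: "x \<in> topspace X" using zcl[OF t] x closedin_subset by blast
      have "f x \<in> g ` (z t)" using zeq t x by blast
      then obtain x' where x': "x' \<in> z t" "f x = g x'" by blast
      have "x' \<in> topspace X" using zcl[OF t] x'(1) closedin_subset by blast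
      then have "x = x'" using assms(6,7) xX x'(2) by metis
      then show ?thesis using x'(2) by simp
    qed
    define u where "u t = {e \<in> topspace E. h e \<in> z t}" for t
    have hu: "h ` (u t) = z t" if t: "t \<in> topspace Z" for t
    proof
      show "h ` u t \<subseteq> z t" by (auto simp: u_def)
      show "z t \<subseteq> h ` u t"
      proof
        fix x assume x: "x \<in> z t"
        have xX: "x \<in> topspace X" using zcl[OF t] x closedin_subset by blast
        obtain e where "e \<in> topspace E" "h e = x" using surj[OF xX zfg[OF t x]] by blast
        then show "x \<in> h ` u t" using x by (auto simp: u_def)
      qed
    qed
    show "\<exists>u. continuous_map Z (vietoris E) u \<and> (\<forall>t\<in>topspace Z. vmap h (u t) = z t)"
    proof (intro exI conjI ballI)
      show "vmap h (u t) = z t" if "t \<in> topspace Z" for t using hu[OF that] by (simp add: vmap_def)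
      show "continuous_map Z (vietoris E) u"
      proof (rule continuous_into_vietoris)
        fix t assume "t \<in> topspace Z"
        then show "closedin E (u t)"
          unfolding u_def using closedin_continuous_map_preimage[OF hc zcl] by blast
      next
        fix U assume U: "openin E U"
        obtain U' where U': "openin X U'" "\<forall>e\<in>topspace E. e \<in> U \<longleftrightarrow> h e \<in> U'" using opn[OF U] by blast
        have "{t \<in> topspace Z. u t \<subseteq> U} = {t \<in> topspace Z. z t \<subseteq> U'}"
        proof (intro Collect_cong conj_cong refl)
          fix t assume t: "t \<in> topspace Z"
          show "u t \<subseteq> U \<longleftrightarrow> z t \<subseteq> U'"
          proof
            assume a: "u t \<subseteq> U"
            show "z t \<subseteq> U'"
            proof
              fix x assume "x \<in> z t"
              then have "x \<in> h ` u t" using hu[OF t] by simp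
              then obtain e where "e \<in> u t" "x = h e" by blast
              then show "x \<in> U'" using a U'(2) by (auto simp: u_def)
            qed
          next
            assume a: "z t \<subseteq> U'"
            show "u t \<subseteq> U" using a U'(2) by (auto simp: u_def)
          qed
        qed
        then show "openin Z {t \<in> topspace Z. u t \<subseteq> U}"
          using continuous_vietoris_Box[OF zc U'(1)] by simp
      next
        fix U assume U: "openin E U"
        obtain U' where U': "openin X U'" "\<forall>e\<in>topspace E. e \<in> U \<longleftrightarrow> h e \<in> U'" using opn[OF U] by blast
        have "{t \<in> topspace Z. u t \<inter> U \<noteq> {}} = {t \<in> topspace Z. z t \<inter> U' \<noteq> {}}"
        proof (intro Collect_cong conj_cong refl)
          fix t assume t: "t \<in> topspace Z"
          show "u t \<inter> U \<noteq> {} \<longleftrightarrow> z t \<inter> U' \<noteq> {}"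
          proof
            assume "u t \<inter> U \<noteq> {}"
            then show "z t \<inter> U' \<noteq> {}" using U'(2) by (auto simp: u_def)
          next
            assume "z t \<inter> U' \<noteq> {}"
            then obtain x where x: "x \<in> z t" "x \<in> U'" by blast
            then have "x \<in> h ` u t" using hu[OF t] by simp
            then obtain e where "e \<in> u t" "x = h e" by blast
            then show "u t \<inter> U \<noteq> {}" using x U'(2) by (auto simp: u_def)
          qed
        qed
        then show "openin Z {t \<in> topspace Z. u t \<inter> U \<noteq> {}}"
          using continuous_vietoris_Dia[OF zc U'(1)] by simp
      qed
    qed
    fix v v'
    assume a: "continuous_map Z (vietoris E) v \<and> continuous_map Z (vietoris E) v' \<and>
             (\<forall>t\<in>topspace Z. vmap h (v t) = z t) \<and> (\<forall>t\<in>topspace Z. vmap h (v' t) = z t)"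
    show "\<forall>t\<in>topspace Z. v t = v' t"
    proof
      fix t assume t: "t \<in> topspace Z"
      have "v t \<subseteq> topspace E" "v' t \<subseteq> topspace E"
        using continuous_vietoris_closed[OF _ t, of E] a closedin_subset by blast+
      moreover have "h ` v t = h ` v' t" using a t by (simp add: vmap_def)
      ultimately show "v t = v' t" using inj inj_on_image_eq_iff by metis
    qed
  qed
qed

end
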